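(* Let $n\ge1$, $m\in\mathbb{N}$, $\mathcal{Q}_m=\bigoplus_{t=0}^mH_t\subseteq H^2(\mathbb{T}^n)$ and $p\in\mathcal{Q}_m$. There exists $f\in\mathcal{Q}_m^\perp$ (orthogonal complement in $H^2(\mathbb{T}^n)$) such that $p+f\in\mathcal{S}(\mathbb{D}^n)$ if and only if $S_p=P_{\mathcal{Q}_m}T_p|_{\mathcal{Q}_m}$ is a contraction and admits a lift, i.e. there is $\varphi\in\mathcal{S}(\mathbb{D}^n)$ with $S_p=P_{\mathcal{Q}_m}T_\varphi|_{\mathcal{Q}_m}$.
   Context: $H_t$ is the space of homogeneous polynomials of degree $t$ in $z_1,\dots,z_n$, viewed inside the Hardy space $H^2(\mathbb{T}^n)$; $\mathcal{Q}_m$ is thus the space of polynomials of degree at most $m$. $T_\varphi f=\varphi f$, $P_{\mathcal{Q}_m}$ the orthogonal projection onto $\mathcal{Q}_m$, $\mathcal{S}(\mathbb{D}^n)$ the closed unit ball of $H^\infty(\mathbb{D}^n)$ with sup norm. *)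

theory Defs
  imports "HOL-Analysis.Analysis"
begin

(* Functions in H^2(T^n) are identified with their Taylor/Fourier coefficient
   families indexed by multi-indices alpha in N^n, encoded as alpha :: nat => nat
   with alpha i = 0 for i >= n. *)

definition multi_idx :: "nat \<Rightarrow> (nat \<Rightarrow> nat) set" where
  "multi_idx n = {\<alpha>. \<forall>i\<ge>n. \<alpha> i = 0}"

definition mdeg :: "nat \<Rightarrow> (nat \<Rightarrow> nat) \<Rightarrow> nat" where
  "mdeg n \<alpha> = (\<Sum>i<n. \<alpha> i)"

definition H2 :: "nat \<Rightarrow> ((nat \<Rightarrow> nat) \<Rightarrow> complex) set" where
  "H2 n = {c. (\<forall>\<alpha>. \<alpha> \<notin> multi_idx n \<longrightarrow> c \<alpha> = 0) \<and>
              (\<lambda>\<alpha>. (norm (c \<alpha>))\<^sup>2) summable_on multi_idx n}"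

definition h2_inner :: "nat \<Rightarrow> ((nat \<Rightarrow> nat) \<Rightarrow> complex) \<Rightarrow> ((nat \<Rightarrow> nat) \<Rightarrow> complex) \<Rightarrow> complex" where
  "h2_inner n f g = infsum (\<lambda>\<alpha>. f \<alpha> * cnj (g \<alpha>)) (multi_idx n)"

definition h2_norm :: "nat \<Rightarrow> ((nat \<Rightarrow> nat) \<Rightarrow> complex) \<Rightarrow> real" where
  "h2_norm n f = sqrt (infsum (\<lambda>\<alpha>. (norm (f \<alpha>))\<^sup>2) (multi_idx n))"

definition Qm :: "nat \<Rightarrow> nat \<Rightarrow> ((nat \<Rightarrow> nat) \<Rightarrow> complex) set" where
  "Qm n m = {c \<in> H2 n. \<forall>\<alpha>. mdeg n \<alpha> > m \<longrightarrow> c \<alpha> = 0}"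

definition Qm_perp :: "nat \<Rightarrow> nat \<Rightarrow> ((nat \<Rightarrow> nat) \<Rightarrow> complex) set" where
  "Qm_perp n m = {f \<in> H2 n. \<forall>q \<in> Qm n m. h2_inner n f q = 0}"

definition proj_Qm :: "nat \<Rightarrow> nat \<Rightarrow> ((nat \<Rightarrow> nat) \<Rightarrow> complex) \<Rightarrow> ((nat \<Rightarrow> nat) \<Rightarrow> complex)" where
  "proj_Qm n m f = (\<lambda>\<alpha>. if \<alpha> \<in> multi_idx n \<and> mdeg n \<alpha> \<le> m then f \<alpha> else 0)"

text \<open>Multiplication operator T_phi f = phi f (Cauchy product of coefficients);
  used only for f a polynomial, where all sums are finite.\<close>
definition mult_op :: "nat \<Rightarrow> ((nat \<Rightarrow> nat) \<Rightarrow> complex) \<Rightarrow> ((nat \<Rightarrow> nat) \<Rightarrow> complex) \<Rightarrow> ((nat \<Rightarrow> nat) \<Rightarrow> complex)" where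
  "mult_op n \<phi> f = (\<lambda>\<alpha>. if \<alpha> \<in> multi_idx n then
      (\<Sum>\<beta>\<in>{\<beta>. \<forall>i. \<beta> i \<le> \<alpha> i}. \<phi> \<beta> * f (\<lambda>i. \<alpha> i - \<beta> i)) else 0)"

definition compr :: "nat \<Rightarrow> nat \<Rightarrow> ((nat \<Rightarrow> nat) \<Rightarrow> complex) \<Rightarrow> ((nat \<Rightarrow> nat) \<Rightarrow> complex) \<Rightarrow> ((nat \<Rightarrow> nat) \<Rightarrow> complex)" where
  "compr n m \<phi> f = proj_Qm n m (mult_op n \<phi> f)"

definition monom :: "nat \<Rightarrow> (nat \<Rightarrow> complex) \<Rightarrow> (nat \<Rightarrow> nat) \<Rightarrow> complex" where
  "monom n z \<alpha> = (\<Prod>i<n. z i ^ \<alpha> i)"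

definition polydisc :: "nat \<Rightarrow> (nat \<Rightarrow> complex) set" where
  "polydisc n = {z. \<forall>i<n. norm (z i) < 1}"

text \<open>Schur class S(D^n): holomorphic functions on D^n with sup norm <= 1,
  identified with their (absolutely convergent on D^n) Taylor coefficients.\<close>
definition schur :: "nat \<Rightarrow> ((nat \<Rightarrow> nat) \<Rightarrow> complex) \<Rightarrow> bool" where
  "schur n c \<longleftrightarrow> (\<forall>\<alpha>. \<alpha> \<notin> multi_idx n \<longrightarrow> c \<alpha> = 0) \<and>
     (\<forall>z \<in> polydisc n. (\<lambda>\<alpha>. c \<alpha> * monom n z \<alpha>) summable_on multi_idx n \<and>
        norm (infsum (\<lambda>\<alpha>. c \<alpha> * monom n z \<alpha>) (multi_idx n)) \<le> 1)"

end

theory Submission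
  imports Defs "HOL-Library.FuncSet"
begin

definition mbox :: "nat \<Rightarrow> nat \<Rightarrow> (nat \<Rightarrow> nat) set" where
  "mbox n N = {\<alpha>. (\<forall>i<n. \<alpha> i < N) \<and> (\<forall>i\<ge>n. \<alpha> i = 0)}"

lemma finite_mbox: "finite (mbox n N)"
proof -
  have eq: "mbox n N = {f. \<forall>x. (x \<in> {..<n} \<longrightarrow> f x \<in> {..<N}) \<and> (x \<notin> {..<n} \<longrightarrow> f x = 0)}"
    unfolding mbox_def lessThan_iff not_less by blast
  show ?thesis unfolding eq by (rule finite_set_of_finite_funs) auto
qed

definition om :: "nat \<Rightarrow> complex" where "om N = exp (2 * of_real pi * \<i> / of_nat N)"

definition ee :: "nat \<Rightarrow> nat \<Rightarrow> (nat\<Rightarrow>nat) \<Rightarrow> (nat\<Rightarrow>nat) \<Rightarrow> complex" where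
  "ee n N k \<alpha> = (\<Prod>i<n. om N ^ (k i * \<alpha> i))"

lemma om_pow_N: assumes "N > 0" shows "om N ^ N = 1"
proof -
  have "om N ^ N = exp (of_nat N * (2 * of_real pi * \<i> / of_nat N))"
    unfolding om_def by (rule exp_of_nat_mult[symmetric])
  also have "of_nat N * (2 * of_real pi * \<i> / of_nat N) = 2 * of_real pi * \<i>"
    using assms by simp
  finally show ?thesis by simp
qed

lemma norm_om: "norm (om N) = 1"
  unfolding om_def by (simp add: norm_exp_eq_Re)

lemma norm_ee: "norm (ee n N k \<alpha>) = 1"
  unfolding ee_def prod_norm[symmetric] norm_power norm_om by simp

lemma om_eq1:
  assumes "N > 0" "a < N" "b < N"
  shows "(om N ^ a * cnj (om N) ^ b = 1) \<longleftrightarrow> a = b"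
proof -
  define c where "c = 2 * of_real pi * \<i> / (of_nat N :: complex)"
  have "om N ^ a * cnj (om N) ^ b = exp (of_nat a * c) * exp (of_nat b * cnj c)"
    unfolding om_def c_def exp_of_nat_mult exp_cnj ..
  also have "\<dots> = exp (of_nat a * c + of_nat b * cnj c)" by (simp add: exp_add)
  finally have eq: "om N ^ a * cnj (om N) ^ b = exp (of_nat a * c + of_nat b * cnj c)" .
  have Re0: "Re (of_nat a * c + of_nat b * cnj c) = 0" unfolding c_def by simp
  have Im: "Im (of_nat a * c + of_nat b * cnj c) = 2 * pi * (real a - real b) / real N"
    unfolding c_def by (simp add: diff_divide_distrib algebra_simps)
  show ?thesis
  proof
    assume "om N ^ a * cnj (om N) ^ b = 1"
    then have "exp (of_nat a * c + of_nat b * cnj c) = 1" using eq by simp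
    then obtain m :: int where "Im (of_nat a * c + of_nat b * cnj c) = real_of_int (2 * m) * pi"
      using exp_eq_1 by blast
    then have m: "2 * pi * (real a - real b) / real N = real_of_int (2 * m) * pi"
      using Im by simp
    then have "pi * (2 * (real a - (real b + real_of_int m * real N))) = 0" using assms(1)
      by (simp add: field_simps)
    then have "real a - real b = real_of_int m * real N" by simp
    then have mi: "int a - int b = m * int N" by (metis of_int_eq_iff of_int_diff of_int_mult of_int_of_nat_eq)
    show "a = b"
    proof (rule ccontr)
      assume "a \<noteq> b"
      then have "m \<noteq> 0" using mi by auto
      then have "1 \<le> \<bar>m\<bar>" by (cases "m > 0") auto
      then have "int N * 1 \<le> int N * \<bar>m\<bar>" by (intro mult_left_mono) auto
      then have "\<bar>m * int N\<bar> \<ge> int N" by (simp add: abs_mult mult.commute)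
      moreover have "\<bar>int a - int b\<bar> < int N" using assms by auto
      ultimately show False using mi by simp
    qed
  next
    assume "a = b"
    have "om N * cnj (om N) = 1" using complex_norm_square[of "om N"] norm_om by simp
    moreover have "om N ^ a * cnj (om N) ^ a = (om N * cnj (om N)) ^ a" by (rule power_mult_distrib[symmetric])
    ultimately show "om N ^ a * cnj (om N) ^ b = 1" using \<open>a = b\<close> by simp
  qed
qed

lemma geo_sum:
  fixes x :: complex
  assumes "N > 0" "x ^ N = 1"
  shows "(\<Sum>j<N. x ^ j) = (if x = 1 then of_nat N else 0)"
  using assms by (simp add: sum_gp_strict)

lemma sum_box_prod:
  fixes f :: "nat \<Rightarrow> nat \<Rightarrow> complex"
  shows "(\<Sum>k\<in>mbox n N. \<Prod>i<n. f i (k i)) = (\<Prod>i<n. \<Sum>j<N. f i j)"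
proof -
  have "(\<Prod>i<n. \<Sum>j<N. f i j) = (\<Sum>g\<in>PiE {..<n} (\<lambda>_. {..<N}). \<Prod>i<n. f i (g i))"
    by (rule prod_sum_PiE) auto
  also have "\<dots> = (\<Sum>k\<in>mbox n N. \<Prod>i<n. f i (k i))"
  proof (rule sum.reindex_bij_witness[where i = "\<lambda>k. restrict k {..<n}" and j = "\<lambda>g i. if i < n then g i else 0"])
    fix a assume a: "a \<in> PiE {..<n} (\<lambda>_. {..<N})"
    show "restrict (\<lambda>i. if i < n then a i else 0) {..<n} = a"
      using a by (intro ext) (simp add: restrict_def PiE_def extensional_def)
    show "(\<lambda>i. if i < n then a i else 0) \<in> mbox n N"
      using a by (simp add: mbox_def PiE_def Pi_def)
    show "(\<Prod>i<n. f i ((\<lambda>i. if i < n then a i else 0) i)) = (\<Prod>i<n. f i (a i))"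
      by simp
  next
    fix b assume b: "b \<in> mbox n N"
    show "(\<lambda>i. if i < n then restrict b {..<n} i else 0) = b"
      using b by (intro ext) (simp add: mbox_def)
    show "restrict b {..<n} \<in> PiE {..<n} (\<lambda>_. {..<N})"
      using b by (simp add: mbox_def)
  qed
  finally show ?thesis by simp
qed

lemma factor_eq: "om N ^ (k * a) * cnj (om N ^ (k * b)) = (om N ^ a * cnj (om N) ^ b) ^ k"
proof -
  have "om N ^ (k * a) = (om N ^ a) ^ k" by (simp add: power_mult mult.commute)
  moreover have "cnj (om N ^ (k * b)) = (cnj (om N) ^ b) ^ k" by (simp add: power_mult mult.commute complex_cnj_power)
  ultimately show ?thesis by (simp add: power_mult_distrib)
qed

lemma xN: assumes "N > 0" shows "(om N ^ a * cnj (om N) ^ b) ^ N = 1"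
proof -
  have "(om N ^ a * cnj (om N) ^ b) ^ N = (om N ^ N) ^ a * cnj ((om N ^ N)) ^ b"
    by (simp add: power_mult_distrib complex_cnj_power flip: power_mult) (simp add: mult.commute)
  then show ?thesis using om_pow_N[OF assms] by simp
qed

lemma orth:
  assumes "N > 0" "\<alpha> \<in> mbox n N" "\<beta> \<in> mbox n N"
  shows "(\<Sum>k\<in>mbox n N. ee n N k \<alpha> * cnj (ee n N k \<beta>)) = (if \<alpha> = \<beta> then of_nat N ^ n else 0)"
proof -
  define x where "x i = om N ^ \<alpha> i * cnj (om N) ^ \<beta> i" for i
  have "ee n N k \<alpha> * cnj (ee n N k \<beta>) = (\<Prod>i<n. x i ^ k i)" for k
    unfolding ee_def x_def cnj_prod prod.distrib[symmetric] factor_eq ..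
  then have "(\<Sum>k\<in>mbox n N. ee n N k \<alpha> * cnj (ee n N k \<beta>)) = (\<Prod>i<n. \<Sum>j<N. x i ^ j)"
    using sum_box_prod[of "\<lambda>i j. x i ^ j" n N] by simp
  also have "\<dots> = (\<Prod>i<n. if \<alpha> i = \<beta> i then of_nat N else 0)"
  proof (rule prod.cong[OF refl])
    fix i assume i: "i \<in> {..<n}"
    have xN: "x i ^ N = 1" unfolding x_def by (rule xN[OF assms(1)])
    have "x i = 1 \<longleftrightarrow> \<alpha> i = \<beta> i" unfolding x_def
      using om_eq1[OF assms(1)] assms(2,3) i by (auto simp: mbox_def)
    then show "(\<Sum>j<N. x i ^ j) = (if \<alpha> i = \<beta> i then of_nat N else 0)"
      using geo_sum[OF assms(1) xN] by simp
  qed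
  also have "\<dots> = (if \<alpha> = \<beta> then of_nat N ^ n else 0)"
  proof (cases "\<alpha> = \<beta>")
    case True then show ?thesis by simp
  next
    case False
    then obtain i where "\<alpha> i \<noteq> \<beta> i" by auto
    moreover have "i < n"
    proof (rule ccontr)
      assume "\<not> i < n"
      then have "\<alpha> i = 0" "\<beta> i = 0" using assms(2,3) unfolding mbox_def by auto
      then show False using \<open>\<alpha> i \<noteq> \<beta> i\<close> by simp
    qed
    ultimately have "\<exists>j\<in>{..<n}. (if \<alpha> j = \<beta> j then complex_of_nat N else 0) = 0" by auto
    then show ?thesis using False by (simp only: if_False) (rule prod_zero[OF finite_lessThan])
  qed
  finally show ?thesis .
qed


definition padd :: "(nat \<Rightarrow> nat) \<Rightarrow> (nat \<Rightarrow> nat) \<Rightarrow> (nat \<Rightarrow> nat)" where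
  "padd \<beta> \<gamma> = (\<lambda>i. \<beta> i + \<gamma> i)"
definition psub :: "(nat \<Rightarrow> nat) \<Rightarrow> (nat \<Rightarrow> nat) \<Rightarrow> (nat \<Rightarrow> nat)" where
  "psub \<alpha> \<gamma> = (\<lambda>i. \<alpha> i - \<gamma> i)"
definition ple :: "(nat \<Rightarrow> nat) \<Rightarrow> (nat \<Rightarrow> nat) \<Rightarrow> bool" where
  "ple \<gamma> \<alpha> \<longleftrightarrow> (\<forall>i. \<gamma> i \<le> \<alpha> i)"

lemma mdeg_padd: "mdeg n (padd \<beta> \<gamma>) = mdeg n \<beta> + mdeg n \<gamma>"
  unfolding mdeg_def padd_def by (simp add: sum.distrib)

lemma mdeg_psub: "ple \<gamma> \<alpha> \<Longrightarrow> mdeg n \<alpha> = mdeg n \<gamma> + mdeg n (psub \<alpha> \<gamma>)"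
  unfolding mdeg_def psub_def ple_def by (simp add: sum.distrib[symmetric])

lemma padd_eq_iff: "padd \<beta> \<gamma> = \<alpha> \<longleftrightarrow> ple \<gamma> \<alpha> \<and> \<beta> = psub \<alpha> \<gamma>"
proof
  assume "padd \<beta> \<gamma> = \<alpha>"
  then have "\<And>i. \<alpha> i = \<beta> i + \<gamma> i" unfolding padd_def by auto
  then show "ple \<gamma> \<alpha> \<and> \<beta> = psub \<alpha> \<gamma>" unfolding ple_def psub_def by auto
next
  assume "ple \<gamma> \<alpha> \<and> \<beta> = psub \<alpha> \<gamma>"
  then show "padd \<beta> \<gamma> = \<alpha>" unfolding ple_def psub_def padd_def by (auto simp: fun_eq_iff)
qed

lemma multi_idx_psub: "\<alpha> \<in> multi_idx n \<Longrightarrow> psub \<alpha> \<gamma> \<in> multi_idx n"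
  unfolding multi_idx_def psub_def by auto

lemma multi_idx_ple: "\<alpha> \<in> multi_idx n \<Longrightarrow> ple \<gamma> \<alpha> \<Longrightarrow> \<gamma> \<in> multi_idx n"
proof -
  assume a: "\<alpha> \<in> multi_idx n" "ple \<gamma> \<alpha>"
  have "\<gamma> i = 0" if "i \<ge> n" for i
  proof -
    have "\<alpha> i = 0" using a(1) that unfolding multi_idx_def by simp
    moreover have "\<gamma> i \<le> \<alpha> i" using a(2) unfolding ple_def by simp
    ultimately show ?thesis by simp
  qed
  then show ?thesis unfolding multi_idx_def by simp
qed

lemma multi_idx_padd: "\<alpha> \<in> multi_idx n \<Longrightarrow> \<beta> \<in> multi_idx n \<Longrightarrow> padd \<alpha> \<beta> \<in> multi_idx n"
  unfolding multi_idx_def padd_def by auto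

lemma coord_le_mdeg: "i < n \<Longrightarrow> \<alpha> i \<le> mdeg n \<alpha>"
  unfolding mdeg_def by (rule member_le_sum) auto

lemma in_mbox: "\<alpha> \<in> multi_idx n \<Longrightarrow> mdeg n \<alpha> < N \<Longrightarrow> \<alpha> \<in> mbox n N"
proof -
  assume a: "\<alpha> \<in> multi_idx n" "mdeg n \<alpha> < N"
  have "\<alpha> i < N" if "i < n" for i using coord_le_mdeg[OF that, of \<alpha>] a(2) by linarith
  then show ?thesis using a(1) unfolding mbox_def multi_idx_def by simp
qed

lemma finite_deg_le: "finite {\<alpha>\<in>multi_idx n. mdeg n \<alpha> \<le> m}"
proof (rule finite_subset[OF _ finite_mbox[of n "Suc m"]])
  show "{\<alpha>\<in>multi_idx n. mdeg n \<alpha> \<le> m} \<subseteq> mbox n (Suc m)"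
    using in_mbox by (simp add: less_Suc_eq_le subset_iff)
qed

lemma finite_ple: "\<alpha> \<in> multi_idx n \<Longrightarrow> finite {\<gamma>. ple \<gamma> \<alpha>}"
proof (rule finite_subset[OF _ finite_deg_le[of n "mdeg n \<alpha>"]])
  assume a: "\<alpha> \<in> multi_idx n"
  show "{\<gamma>. ple \<gamma> \<alpha>} \<subseteq> {\<alpha>'\<in>multi_idx n. mdeg n \<alpha>' \<le> mdeg n \<alpha>}"
  proof
    fix \<gamma> assume "\<gamma> \<in> {\<gamma>. ple \<gamma> \<alpha>}"
    then have p: "ple \<gamma> \<alpha>" by simp
    then have "\<gamma> \<in> multi_idx n" using multi_idx_ple[OF a] by blast
    moreover have "mdeg n \<gamma> \<le> mdeg n \<alpha>" using mdeg_psub[OF p, of n] by simp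
    ultimately show "\<gamma> \<in> {\<alpha>'\<in>multi_idx n. mdeg n \<alpha>' \<le> mdeg n \<alpha>}" by simp
  qed
qed

lemma ee_padd: "ee n N k (padd \<beta> \<gamma>) = ee n N k \<beta> * ee n N k \<gamma>"
  unfolding ee_def padd_def by (simp add: distrib_left power_add prod.distrib)

lemma monom_grid:
  "monom n (\<lambda>i. complex_of_real r * om N ^ k i) \<beta> = complex_of_real r ^ mdeg n \<beta> * ee n N k \<beta>"
proof -
  have "monom n (\<lambda>i. complex_of_real r * om N ^ k i) \<beta> = (\<Prod>i<n. complex_of_real r ^ \<beta> i * om N ^ (k i * \<beta> i))"
    unfolding monom_def by (simp add: power_mult_distrib power_mult)
  also have "\<dots> = (\<Prod>i<n. complex_of_real r ^ \<beta> i) * ee n N k \<beta>"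
    unfolding ee_def by (rule prod.distrib)
  also have "(\<Prod>i<n. complex_of_real r ^ \<beta> i) = complex_of_real r ^ mdeg n \<beta>"
    unfolding mdeg_def by (rule power_sum[symmetric])
  finally show ?thesis .
qed

lemma monom_const:
  "monom n (\<lambda>i. complex_of_real r) \<beta> = complex_of_real r ^ mdeg n \<beta>"
  unfolding monom_def mdeg_def by (rule power_sum[symmetric])

lemma grid_polydisc: "0 \<le> r \<Longrightarrow> r < 1 \<Longrightarrow> (\<lambda>i. complex_of_real r * om N ^ k i) \<in> polydisc n"
  unfolding polydisc_def by (simp add: norm_mult norm_power norm_om)

lemma const_polydisc: "0 \<le> r \<Longrightarrow> r < 1 \<Longrightarrow> (\<lambda>i. complex_of_real r) \<in> polydisc n"
  unfolding polydisc_def by simp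

lemma infsum_finite_support:
  assumes "finite B" "B \<subseteq> A" "\<And>x. x \<in> A - B \<Longrightarrow> f x = 0"
  shows "infsum f A = sum f B" "f summable_on A"
proof -
  have "(f has_sum sum f B) A" by (rule has_sum_finite_neutralI) (use assms in auto)
  then show "infsum f A = sum f B" "f summable_on A" by (auto simp: has_sum_iff)
qed

lemma infsum_sum_fin:
  fixes f :: "'s \<Rightarrow> 'a \<Rightarrow> complex"
  assumes "finite S" "\<And>s. s \<in> S \<Longrightarrow> f s summable_on A"
  shows "infsum (\<lambda>x. \<Sum>s\<in>S. f s x) A = (\<Sum>s\<in>S. infsum (f s) A) \<and> (\<lambda>x. \<Sum>s\<in>S. f s x) summable_on A"
  using assms
proof (induction S rule: finite_induct)
  case empty then show ?case by simp
next
  case (insert s S)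
  have fs: "f s summable_on A" using insert by simp
  have IH: "infsum (\<lambda>x. \<Sum>s\<in>S. f s x) A = (\<Sum>s\<in>S. infsum (f s) A)" "(\<lambda>x. \<Sum>s\<in>S. f s x) summable_on A"
    using insert by auto
  have "infsum (\<lambda>x. \<Sum>s\<in>insert s S. f s x) A = infsum (\<lambda>x. f s x + (\<Sum>s\<in>S. f s x)) A"
    using insert by simp
  also have "\<dots> = infsum (f s) A + infsum (\<lambda>x. \<Sum>s\<in>S. f s x) A"
    using fs IH(2) by (rule infsum_add)
  finally have 1: "infsum (\<lambda>x. \<Sum>s\<in>insert s S. f s x) A = (\<Sum>s\<in>insert s S. infsum (f s) A)"
    using IH(1) insert by simp
  have "(\<lambda>x. f s x + (\<Sum>s\<in>S. f s x)) summable_on A" using fs IH(2) by (rule summable_on_add)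
  then have 2: "(\<lambda>x. \<Sum>s\<in>insert s S. f s x) summable_on A" using insert by simp
  show ?case using 1 2 by simp
qed

lemma bdd_mult_summable:
  fixes a h :: "'a \<Rightarrow> complex"
  assumes "a summable_on A" "\<And>x. x \<in> A \<Longrightarrow> norm (h x) \<le> M"
  shows "(\<lambda>x. a x * h x) summable_on A"
proof -
  have "(\<lambda>x. norm (a x)) summable_on A" using assms(1) summable_on_iff_abs_summable_on_complex by blast
  then have s: "(\<lambda>x. M * norm (a x)) summable_on A" by (rule summable_on_cmult_right)
  have le: "norm (a x * h x) \<le> M * norm (a x)" if "x \<in> A" for x
  proof -
    have "norm (a x * h x) = norm (a x) * norm (h x)" by (simp add: norm_mult)
    also have "\<dots> \<le> norm (a x) * M" using assms(2)[OF that] by (simp add: mult_left_mono)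
    finally show ?thesis by (simp add: mult.commute)
  qed
  have "(\<lambda>x. norm (a x * h x)) summable_on A"
    by (rule summable_on_comparison_test[OF s le]) auto
  then show ?thesis using summable_on_iff_abs_summable_on_complex by blast
qed


lemma orth2:
  assumes N: "N > 0" and fin: "finite U" "finite V" and p: "\<And>x. x \<in> U \<Longrightarrow> p x \<in> mbox n N"
    and V: "V \<subseteq> mbox n N"
  shows "(\<Sum>k\<in>mbox n N. (\<Sum>x\<in>U. u x * ee n N k (p x)) * cnj (\<Sum>y\<in>V. v y * ee n N k y))
       = of_nat N ^ n * (\<Sum>x\<in>U. \<Sum>y\<in>V. if p x = y then u x * cnj (v y) else 0)"
proof -
  let ?K = "mbox n N"
  have 1: "(\<Sum>x\<in>U. u x * ee n N k (p x)) * cnj (\<Sum>y\<in>V. v y * ee n N k y)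
      = (\<Sum>x\<in>U. \<Sum>y\<in>V. (u x * cnj (v y)) * (ee n N k (p x) * cnj (ee n N k y)))" for k
    by (simp add: sum_product mult_ac)
  have "(\<Sum>k\<in>?K. \<Sum>x\<in>U. \<Sum>y\<in>V. (u x * cnj (v y)) * (ee n N k (p x) * cnj (ee n N k y)))
      = (\<Sum>x\<in>U. \<Sum>k\<in>?K. \<Sum>y\<in>V. (u x * cnj (v y)) * (ee n N k (p x) * cnj (ee n N k y)))"
    by (rule sum.swap)
  also have "\<dots> = (\<Sum>x\<in>U. \<Sum>y\<in>V. \<Sum>k\<in>?K. (u x * cnj (v y)) * (ee n N k (p x) * cnj (ee n N k y)))"
    by (rule sum.cong[OF refl], rule sum.swap)
  also have "\<dots> = (\<Sum>x\<in>U. \<Sum>y\<in>V. (u x * cnj (v y)) * (\<Sum>k\<in>?K. ee n N k (p x) * cnj (ee n N k y)))"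
    by (simp add: sum_distrib_left)
  also have "\<dots> = (\<Sum>x\<in>U. \<Sum>y\<in>V. (u x * cnj (v y)) * (if p x = y then of_nat N ^ n else 0))"
  proof (intro sum.cong refl)
    fix x y assume "x \<in> U" "y \<in> V"
    then show "(u x * cnj (v y)) * (\<Sum>k\<in>?K. ee n N k (p x) * cnj (ee n N k y)) =
               (u x * cnj (v y)) * (if p x = y then of_nat N ^ n else 0)"
      using orth[OF N p[of x], of y] V by auto
  qed
  also have "\<dots> = of_nat N ^ n * (\<Sum>x\<in>U. \<Sum>y\<in>V. if p x = y then u x * cnj (v y) else 0)"
    by (simp add: sum_distrib_left if_distrib mult.commute cong: if_cong)
  finally show ?thesis using 1 by simp
qed

lemma tail_bound:
  fixes a h :: "'a \<Rightarrow> complex"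
  assumes a: "a summable_on A" and T: "T \<subseteq> A" and h0: "\<And>x. x \<in> T \<Longrightarrow> h x = 0"
    and hM: "\<And>x. x \<in> A \<Longrightarrow> norm (h x) \<le> M"
  shows "norm (infsum (\<lambda>x. a x * h x) A) \<le> M * infsum (\<lambda>x. norm (a x)) (A - T)"
proof -
  have eq: "infsum (\<lambda>x. a x * h x) A = infsum (\<lambda>x. a x * h x) (A - T)"
    by (rule infsum_cong_neutral) (use h0 in auto)
  have aT: "a summable_on (A - T)" using a by (rule summable_on_subset) auto
  have naT: "(\<lambda>x. norm (a x)) summable_on (A - T)"
    using aT summable_on_iff_abs_summable_on_complex by blast
  have ahT: "(\<lambda>x. a x * h x) summable_on (A - T)"
    by (rule bdd_mult_summable[OF aT]) (use hM in auto)
  then have nahT: "(\<lambda>x. norm (a x * h x)) summable_on (A - T)"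
    using summable_on_iff_abs_summable_on_complex[THEN iffD1] by blast
  have "norm (infsum (\<lambda>x. a x * h x) (A - T)) \<le> infsum (\<lambda>x. norm (a x * h x)) (A - T)"
    by (rule norm_infsum_bound) (use nahT in simp)
  also have "\<dots> \<le> infsum (\<lambda>x. M * norm (a x)) (A - T)"
  proof (rule infsum_mono[OF nahT])
    show "(\<lambda>x. M * norm (a x)) summable_on (A - T)" using naT by (rule summable_on_cmult_right)
    fix x assume "x \<in> A - T"
    then have "norm (h x) \<le> M" using hM by auto
    then have "norm (a x) * norm (h x) \<le> norm (a x) * M" by (simp add: mult_left_mono)
    then show "norm (a x * h x) \<le> M * norm (a x)"
      by (simp add: norm_mult mult.commute)
  qed
  also have "\<dots> = M * infsum (\<lambda>x. norm (a x)) (A - T)"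
    by (rule infsum_cmult_right) (use naT in simp)
  finally show ?thesis using eq by simp
qed

lemma mult_op_G:
  assumes a: "\<alpha> \<in> multi_idx n" and G: "finite G" and g0: "\<And>\<gamma>. \<gamma> \<notin> G \<Longrightarrow> g \<gamma> = 0"
  shows "mult_op n \<phi> g \<alpha> = (\<Sum>\<gamma>\<in>{\<gamma>\<in>G. ple \<gamma> \<alpha>}. g \<gamma> * \<phi> (psub \<alpha> \<gamma>))"
proof -
  have "mult_op n \<phi> g \<alpha> = (\<Sum>\<beta>\<in>{\<beta>. ple \<beta> \<alpha>}. \<phi> \<beta> * g (psub \<alpha> \<beta>))"
    unfolding mult_op_def ple_def psub_def using a by simp
  also have "\<dots> = (\<Sum>\<gamma>\<in>{\<gamma>. ple \<gamma> \<alpha>}. g \<gamma> * \<phi> (psub \<alpha> \<gamma>))"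
  proof (rule sum.reindex_bij_witness[where i = "psub \<alpha>" and j = "psub \<alpha>"])
    fix x assume "x \<in> {\<gamma>. ple \<gamma> \<alpha>}"
    then have "ple x \<alpha>" by simp
    then show "psub \<alpha> (psub \<alpha> x) = x" "psub \<alpha> x \<in> {\<gamma>. ple \<gamma> \<alpha>}"
      unfolding ple_def psub_def by (auto simp: fun_eq_iff)
    show "g (psub \<alpha> x) * \<phi> (psub \<alpha> (psub \<alpha> x)) = \<phi> x * g (psub \<alpha> x)"
      using \<open>ple x \<alpha>\<close> unfolding ple_def psub_def by (simp add: fun_eq_iff mult.commute)
  next
    fix x assume "x \<in> {\<gamma>. ple \<gamma> \<alpha>}"
    then have "ple x \<alpha>" by simp
    then show "psub \<alpha> (psub \<alpha> x) = x" "psub \<alpha> x \<in> {\<beta>. ple \<beta> \<alpha>}"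
      unfolding ple_def psub_def by (auto simp: fun_eq_iff)
  qed
  also have "\<dots> = (\<Sum>\<gamma>\<in>{\<gamma>\<in>G. ple \<gamma> \<alpha>}. g \<gamma> * \<phi> (psub \<alpha> \<gamma>))"
    by (rule sum.mono_neutral_right) (use finite_ple[OF a] g0 in auto)
  finally show ?thesis .
qed

lemma infsum_delta:
  assumes a: "\<alpha> \<in> multi_idx n"
  shows "infsum (\<lambda>\<beta>. if padd \<beta> \<gamma> = \<alpha> then c \<beta> else 0) (multi_idx n) = (if ple \<gamma> \<alpha> then c (psub \<alpha> \<gamma>) else 0)"
    and "(\<lambda>\<beta>. if padd \<beta> \<gamma> = \<alpha> then c \<beta> else 0) summable_on (multi_idx n)"
proof -
  have "infsum (\<lambda>\<beta>. if padd \<beta> \<gamma> = \<alpha> then c \<beta> else 0) (multi_idx n) = (if ple \<gamma> \<alpha> then c (psub \<alpha> \<gamma>) else 0)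
        \<and> (\<lambda>\<beta>. if padd \<beta> \<gamma> = \<alpha> then c \<beta> else 0) summable_on (multi_idx n)"
  proof (cases "ple \<gamma> \<alpha>")
    case True
    have B: "{psub \<alpha> \<gamma>} \<subseteq> multi_idx n" using multi_idx_psub[OF a] by simp
    have z: "\<And>x. x \<in> multi_idx n - {psub \<alpha> \<gamma>} \<Longrightarrow> (if padd x \<gamma> = \<alpha> then c x else 0) = 0"
      using padd_eq_iff by auto
    have pa: "padd (psub \<alpha> \<gamma>) \<gamma> = \<alpha>" using padd_eq_iff True by blast
    show ?thesis using infsum_finite_support[OF _ B z] True pa by simp
  next
    case False
    have z: "\<And>x. x \<in> multi_idx n - {} \<Longrightarrow> (if padd x \<gamma> = \<alpha> then c x else 0) = 0"
      using padd_eq_iff False by auto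
    have "infsum (\<lambda>\<beta>. if padd \<beta> \<gamma> = \<alpha> then c \<beta> else 0) (multi_idx n) = sum (\<lambda>\<beta>. if padd \<beta> \<gamma> = \<alpha> then c \<beta> else 0) {}"
         "(\<lambda>\<beta>. if padd \<beta> \<gamma> = \<alpha> then c \<beta> else 0) summable_on (multi_idx n)"
      by (rule infsum_finite_support[OF finite.emptyI empty_subsetI z], assumption)+
    then show ?thesis using False by simp
  qed
  then show "infsum (\<lambda>\<beta>. if padd \<beta> \<gamma> = \<alpha> then c \<beta> else 0) (multi_idx n) = (if ple \<gamma> \<alpha> then c (psub \<alpha> \<gamma>) else 0)"
    and "(\<lambda>\<beta>. if padd \<beta> \<gamma> = \<alpha> then c \<beta> else 0) summable_on (multi_idx n)" by auto
qed


lemma two_mul_le: "2 * ((x::real) * y) \<le> x^2 + y^2"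
proof -
  have "0 \<le> (x - y)^2" by simp
  then show ?thesis by (simp add: power2_diff)
qed

lemma cnorm_sq: "(complex_of_real (norm z))^2 = z * cnj z"
  using complex_norm_square[of z] by simp

lemma key_r:
  fixes \<phi> g :: "(nat\<Rightarrow>nat) \<Rightarrow> complex" and r \<delta> :: real
  assumes sch: "schur n \<phi>" and r: "0 < r" "r < 1" and \<delta>: "\<delta> > 0"
    and G: "finite G" "G \<subseteq> multi_idx n" and g0: "\<And>\<gamma>. \<gamma> \<notin> G \<Longrightarrow> g \<gamma> = 0"
    and F: "finite F" "F \<subseteq> multi_idx n"
  shows "(\<Sum>\<alpha>\<in>F. (norm (mult_op n \<phi> g \<alpha> * of_real r ^ mdeg n \<alpha>))^2)
        \<le> (\<Sum>\<gamma>\<in>G. (norm (g \<gamma> * of_real r ^ mdeg n \<gamma>))^2)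
          + 4 * (\<Sum>\<gamma>\<in>G. norm (g \<gamma> * of_real r ^ mdeg n \<gamma>)) * (\<Sum>\<alpha>\<in>F. norm (mult_op n \<phi> g \<alpha> * of_real r ^ mdeg n \<alpha>)) * \<delta>"
proof -
  define I where "I = multi_idx n"
  define a where "a \<beta> = \<phi> \<beta> * of_real r ^ mdeg n \<beta>" for \<beta>
  define na where "na \<beta> = norm (a \<beta>)" for \<beta>
  have a_sum: "a summable_on I"
  proof -
    have "(\<lambda>\<beta>. \<phi> \<beta> * monom n (\<lambda>i. complex_of_real r) \<beta>) summable_on multi_idx n"
      using sch const_polydisc[of r n] r unfolding schur_def by auto
    then show ?thesis unfolding a_def I_def monom_const .
  qed
  have na_sum: "na summable_on I"
    unfolding na_def using summable_on_iff_abs_summable_on_complex[THEN iffD1, OF a_sum] .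
  obtain T where T: "finite T" "T \<subseteq> I" "dist (sum na T) (infsum na I) \<le> \<delta>"
    using infsum_finite_approximation[OF na_sum \<delta>] by blast
  have tail: "infsum na (I - T) \<le> \<delta>"
  proof -
    have "infsum na (I - T) = infsum na I - infsum na T"
      by (rule infsum_Diff[OF na_sum _ T(2)]) (simp add: T(1))
    also have "infsum na T = sum na T" using T(1) by simp
    finally show ?thesis using T(3) by (simp add: dist_real_def)
  qed
  define N where "N = Suc ((\<Sum>\<beta>\<in>T. mdeg n \<beta>) + (\<Sum>\<alpha>\<in>F. mdeg n \<alpha>) + (\<Sum>\<gamma>\<in>G. mdeg n \<gamma>))"
  have N0: "N > 0" unfolding N_def by simp
  have mdeg_le: "mdeg n x \<le> (\<Sum>y\<in>X. mdeg n y)" if "finite X" "x \<in> X" for x X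
    by (rule member_le_sum) (use that in auto)
  have FK: "F \<subseteq> mbox n N"
  proof
    fix \<alpha> assume "\<alpha> \<in> F"
    then have "\<alpha> \<in> multi_idx n" "mdeg n \<alpha> < N" using F mdeg_le[OF F(1), of \<alpha>] unfolding N_def by auto
    then show "\<alpha> \<in> mbox n N" by (rule in_mbox)
  qed
  have GK: "G \<subseteq> mbox n N"
  proof
    fix \<alpha> assume "\<alpha> \<in> G"
    then have "\<alpha> \<in> multi_idx n" "mdeg n \<alpha> < N" using G mdeg_le[OF G(1), of \<alpha>] unfolding N_def by auto
    then show "\<alpha> \<in> mbox n N" by (rule in_mbox)
  qed
  have TGK: "padd \<beta> \<gamma> \<in> mbox n N" if "\<beta> \<in> T" "\<gamma> \<in> G" for \<beta> \<gamma>
  proof (rule in_mbox)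
    show "padd \<beta> \<gamma> \<in> multi_idx n" by (rule multi_idx_padd) (use that T(2) G(2) I_def in auto)
    have "mdeg n \<beta> \<le> (\<Sum>\<beta>\<in>T. mdeg n \<beta>)" "mdeg n \<gamma> \<le> (\<Sum>\<gamma>\<in>G. mdeg n \<gamma>)"
      using mdeg_le[OF T(1) that(1)] mdeg_le[OF G(1) that(2)] by auto
    then show "mdeg n (padd \<beta> \<gamma>) < N" unfolding mdeg_padd N_def by linarith
  qed
  define K where "K = mbox n N"
  define NR where "NR = real N ^ n"
  define Nn where "Nn = (of_nat N ^ n :: complex)"
  have Nn: "Nn = of_real NR" unfolding Nn_def NR_def by simp
  have NR0: "NR > 0" unfolding NR_def using N0 by simp
  have cardK: "real (card K) = NR"
  proof -
    have "(\<Sum>k\<in>K. \<Prod>i<n. (1::complex)) = (\<Prod>i<n. \<Sum>j<N. (1::complex))"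
      unfolding K_def by (rule sum_box_prod)
    then have "(of_nat (card K) :: complex) = of_nat (N ^ n)" by simp
    then have "card K = N ^ n" by (simp only: of_nat_eq_iff)
    then show ?thesis unfolding NR_def by simp
  qed
  define b where "b \<alpha> = mult_op n \<phi> g \<alpha> * of_real r ^ mdeg n \<alpha>" for \<alpha>
  define gr where "gr \<gamma> = g \<gamma> * of_real r ^ mdeg n \<gamma>" for \<gamma>
  define Gv where "Gv k = (\<Sum>\<gamma>\<in>G. gr \<gamma> * ee n N k \<gamma>)" for k
  define Bv where "Bv k = (\<Sum>\<alpha>\<in>F. b \<alpha> * ee n N k \<alpha>)" for k
  define Phi where "Phi k = infsum (\<lambda>\<beta>. a \<beta> * ee n N k \<beta>) I" for k
  define Gs where "Gs = (\<Sum>\<gamma>\<in>G. norm (gr \<gamma>))"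
  define Bs where "Bs = (\<Sum>\<alpha>\<in>F. norm (b \<alpha>))"
  define Sr where "Sr = (\<Sum>\<alpha>\<in>F. (norm (b \<alpha>))^2)"
  define Gr where "Gr = (\<Sum>\<gamma>\<in>G. (norm (gr \<gamma>))^2)"
  have Gs0: "Gs \<ge> 0" unfolding Gs_def by (simp add: sum_nonneg)
  have Bs0: "Bs \<ge> 0" unfolding Bs_def by (simp add: sum_nonneg)
  have Phi1: "norm (Phi k) \<le> 1" for k
  proof -
    have "(\<lambda>i. of_real r * om N ^ k i) \<in> polydisc n" using grid_polydisc r by simp
    then have "norm (infsum (\<lambda>\<beta>. \<phi> \<beta> * monom n (\<lambda>i. of_real r * om N ^ k i) \<beta>) (multi_idx n)) \<le> 1"
      using sch unfolding schur_def by blast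
    then show ?thesis unfolding Phi_def a_def I_def monom_grid by (simp add: mult.assoc)
  qed
  have Gv_le: "norm (Gv k) \<le> Gs" for k
  proof -
    have "norm (Gv k) \<le> (\<Sum>\<gamma>\<in>G. norm (gr \<gamma> * ee n N k \<gamma>))" unfolding Gv_def by (rule norm_sum)
    also have "\<dots> = Gs" unfolding Gs_def by (simp add: norm_mult norm_ee)
    finally show ?thesis .
  qed
  have Bv_le: "norm (Bv k) \<le> Bs" for k
  proof -
    have "norm (Bv k) \<le> (\<Sum>\<alpha>\<in>F. norm (b \<alpha> * ee n N k \<alpha>))" unfolding Bv_def by (rule norm_sum)
    also have "\<dots> = Bs" unfolding Bs_def by (simp add: norm_mult norm_ee)
    finally show ?thesis .
  qed
  have parG: "(\<Sum>k\<in>K. (norm (Gv k))^2) = NR * Gr"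
  proof -
    have "(\<Sum>k\<in>K. (\<Sum>x\<in>G. gr x * ee n N k ((\<lambda>x. x) x)) * cnj (\<Sum>y\<in>G. gr y * ee n N k y))
          = of_nat N ^ n * (\<Sum>x\<in>G. \<Sum>y\<in>G. if (\<lambda>x. x) x = y then gr x * cnj (gr y) else 0)"
      unfolding K_def by (rule orth2[OF N0 G(1) G(1)]) (use GK in auto)
    then have "(\<Sum>k\<in>K. Gv k * cnj (Gv k)) = Nn * (\<Sum>x\<in>G. gr x * cnj (gr x))"
      unfolding Gv_def Nn_def using G(1) by simp
    then have "of_real (\<Sum>k\<in>K. (norm (Gv k))^2) = Nn * of_real Gr"
      unfolding Gr_def by (simp add: cnorm_sq)
    then show ?thesis unfolding Nn by (metis of_real_eq_iff of_real_mult)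
  qed
  have parB: "(\<Sum>k\<in>K. (norm (Bv k))^2) = NR * Sr"
  proof -
    have "(\<Sum>k\<in>K. (\<Sum>x\<in>F. b x * ee n N k ((\<lambda>x. x) x)) * cnj (\<Sum>y\<in>F. b y * ee n N k y))
          = of_nat N ^ n * (\<Sum>x\<in>F. \<Sum>y\<in>F. if (\<lambda>x. x) x = y then b x * cnj (b y) else 0)"
      unfolding K_def by (rule orth2[OF N0 F(1) F(1)]) (use FK in auto)
    then have "(\<Sum>k\<in>K. Bv k * cnj (Bv k)) = Nn * (\<Sum>x\<in>F. b x * cnj (b x))"
      unfolding Bv_def Nn_def using F(1) by simp
    then have "of_real (\<Sum>k\<in>K. (norm (Bv k))^2) = Nn * of_real Sr"
      unfolding Sr_def by (simp add: cnorm_sq)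
    then show ?thesis unfolding Nn by (metis of_real_eq_iff of_real_mult)
  qed
  define Q where "Q = (\<Sum>k\<in>K. Phi k * Gv k * cnj (Bv k))"
  have ReQ: "2 * Re Q \<le> NR * Gr + NR * Sr"
  proof -
    have trm: "2 * Re (Phi k * Gv k * cnj (Bv k)) \<le> (norm (Gv k))^2 + (norm (Bv k))^2" for k
    proof -
      have "Re (Phi k * Gv k * cnj (Bv k)) \<le> norm (Phi k * Gv k * cnj (Bv k))" by (rule complex_Re_le_cmod)
      also have "\<dots> = norm (Phi k) * (norm (Gv k) * norm (Bv k))" by (simp add: norm_mult)
      also have "\<dots> \<le> 1 * (norm (Gv k) * norm (Bv k))"
        by (rule mult_right_mono[OF Phi1]) simp
      finally have "Re (Phi k * Gv k * cnj (Bv k)) \<le> norm (Gv k) * norm (Bv k)" by simp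
      moreover have "2 * (norm (Gv k) * norm (Bv k)) \<le> (norm (Gv k))^2 + (norm (Bv k))^2" by (rule two_mul_le)
      ultimately show ?thesis by linarith
    qed
    have "2 * Re Q = (\<Sum>k\<in>K. 2 * Re (Phi k * Gv k * cnj (Bv k)))" unfolding Q_def by (simp add: sum_distrib_left)
    also have "\<dots> \<le> (\<Sum>k\<in>K. (norm (Gv k))^2 + (norm (Bv k))^2)" by (rule sum_mono) (rule trm)
    also have "\<dots> = NR * Gr + NR * Sr" using parG parB by (simp add: sum.distrib)
    finally show ?thesis .
  qed
  define Wt where "Wt \<beta> = (\<Sum>k\<in>K. ee n N k \<beta> * (Gv k * cnj (Bv k)))" for \<beta>
  have sk: "(\<lambda>\<beta>. a \<beta> * ee n N k \<beta>) summable_on I" for k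
    by (rule bdd_mult_summable[OF a_sum, where M=1]) (simp add: norm_ee)
  have Q_eq: "Q = infsum (\<lambda>\<beta>. a \<beta> * Wt \<beta>) I"
  proof -
    have "Phi k * Gv k * cnj (Bv k) = infsum (\<lambda>\<beta>. a \<beta> * ee n N k \<beta> * (Gv k * cnj (Bv k))) I" for k
      unfolding Phi_def mult.assoc[of "Phi k"] using infsum_cmult_left[of "Gv k * cnj (Bv k)" "\<lambda>\<beta>. a \<beta> * ee n N k \<beta>" I] sk[of k]
      by simp
    then have "Q = (\<Sum>k\<in>K. infsum (\<lambda>\<beta>. a \<beta> * ee n N k \<beta> * (Gv k * cnj (Bv k))) I)"
      unfolding Q_def by simp
    also have "\<dots> = infsum (\<lambda>\<beta>. \<Sum>k\<in>K. a \<beta> * ee n N k \<beta> * (Gv k * cnj (Bv k))) I"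
      using infsum_sum_fin[of K "\<lambda>k \<beta>. a \<beta> * ee n N k \<beta> * (Gv k * cnj (Bv k))" I]
        finite_mbox summable_on_cmult_left[OF sk] unfolding K_def by simp
    also have "\<dots> = infsum (\<lambda>\<beta>. a \<beta> * Wt \<beta>) I" unfolding Wt_def by (simp add: sum_distrib_left mult.assoc)
    finally show ?thesis .
  qed
  define Vt where "Vt \<beta> = Nn * (\<Sum>\<gamma>\<in>G. \<Sum>\<alpha>\<in>F. if padd \<beta> \<gamma> = \<alpha> then gr \<gamma> * cnj (b \<alpha>) else 0)" for \<beta>
  have WV: "Wt \<beta> = Vt \<beta>" if "\<beta> \<in> T" for \<beta>
  proof -
    have "ee n N k \<beta> * Gv k = (\<Sum>\<gamma>\<in>G. gr \<gamma> * ee n N k (padd \<beta> \<gamma>))" for k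
      unfolding Gv_def by (simp add: sum_distrib_left ee_padd mult_ac)
    then have "Wt \<beta> = (\<Sum>k\<in>K. (\<Sum>\<gamma>\<in>G. gr \<gamma> * ee n N k (padd \<beta> \<gamma>)) * cnj (\<Sum>\<alpha>\<in>F. b \<alpha> * ee n N k \<alpha>))"
      unfolding Wt_def Bv_def by (simp add: mult.assoc[symmetric])
    also have "\<dots> = Vt \<beta>" unfolding Vt_def Nn_def K_def
      by (rule orth2[OF N0 G(1) F(1)]) (use TGK that FK in auto)
    finally show ?thesis .
  qed
  have Wt_bd: "norm (Wt \<beta>) \<le> NR * Gs * Bs" for \<beta>
  proof -
    have "norm (Wt \<beta>) \<le> (\<Sum>k\<in>K. norm (ee n N k \<beta> * (Gv k * cnj (Bv k))))" unfolding Wt_def by (rule norm_sum)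
    also have "\<dots> \<le> (\<Sum>k\<in>K. Gs * Bs)"
    proof (rule sum_mono)
      fix k
      have "norm (ee n N k \<beta> * (Gv k * cnj (Bv k))) = norm (Gv k) * norm (Bv k)" by (simp add: norm_mult norm_ee)
      also have "\<dots> \<le> Gs * Bs" by (rule mult_mono[OF Gv_le Bv_le]) (auto simp: Gs0)
      finally show "norm (ee n N k \<beta> * (Gv k * cnj (Bv k))) \<le> Gs * Bs" .
    qed
    also have "\<dots> = NR * Gs * Bs" using cardK by simp
    finally show ?thesis .
  qed
  have Vt_bd: "norm (Vt \<beta>) \<le> NR * Gs * Bs" for \<beta>
  proof -
    have "norm (\<Sum>\<gamma>\<in>G. \<Sum>\<alpha>\<in>F. if padd \<beta> \<gamma> = \<alpha> then gr \<gamma> * cnj (b \<alpha>) else 0)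
        \<le> (\<Sum>\<gamma>\<in>G. norm (\<Sum>\<alpha>\<in>F. if padd \<beta> \<gamma> = \<alpha> then gr \<gamma> * cnj (b \<alpha>) else 0))" by (rule norm_sum)
    also have "\<dots> \<le> (\<Sum>\<gamma>\<in>G. \<Sum>\<alpha>\<in>F. norm (gr \<gamma>) * norm (b \<alpha>))"
    proof (rule sum_mono)
      fix \<gamma>
      have "norm (\<Sum>\<alpha>\<in>F. if padd \<beta> \<gamma> = \<alpha> then gr \<gamma> * cnj (b \<alpha>) else 0)
          \<le> (\<Sum>\<alpha>\<in>F. norm (if padd \<beta> \<gamma> = \<alpha> then gr \<gamma> * cnj (b \<alpha>) else 0))" by (rule norm_sum)
      also have "\<dots> \<le> (\<Sum>\<alpha>\<in>F. norm (gr \<gamma>) * norm (b \<alpha>))"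
        by (rule sum_mono) (simp add: norm_mult)
      finally show "norm (\<Sum>\<alpha>\<in>F. if padd \<beta> \<gamma> = \<alpha> then gr \<gamma> * cnj (b \<alpha>) else 0) \<le> (\<Sum>\<alpha>\<in>F. norm (gr \<gamma>) * norm (b \<alpha>))" .
    qed
    also have "\<dots> = Gs * Bs" unfolding Gs_def Bs_def by (simp add: sum_product)
    finally have "norm (\<Sum>\<gamma>\<in>G. \<Sum>\<alpha>\<in>F. if padd \<beta> \<gamma> = \<alpha> then gr \<gamma> * cnj (b \<alpha>) else 0) \<le> Gs * Bs" .
    then show ?thesis unfolding Vt_def Nn norm_mult using NR0
      by (simp add: mult.assoc mult_left_mono)
  qed
  have inner: "(\<Sum>\<gamma>\<in>G. gr \<gamma> * (if ple \<gamma> \<alpha> then a (psub \<alpha> \<gamma>) else 0)) = b \<alpha>" if "\<alpha> \<in> F" for \<alpha>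
  proof -
    have \<alpha>I: "\<alpha> \<in> multi_idx n" using that F(2) by auto
    have "(\<Sum>\<gamma>\<in>G. gr \<gamma> * (if ple \<gamma> \<alpha> then a (psub \<alpha> \<gamma>) else 0)) = (\<Sum>\<gamma>\<in>G. if ple \<gamma> \<alpha> then gr \<gamma> * a (psub \<alpha> \<gamma>) else 0)"
      by (intro sum.cong refl) simp
    also have "\<dots> = (\<Sum>\<gamma>\<in>{\<gamma>\<in>G. ple \<gamma> \<alpha>}. gr \<gamma> * a (psub \<alpha> \<gamma>))"
      by (rule sum.inter_filter[symmetric, OF G(1)])
    also have "\<dots> = (\<Sum>\<gamma>\<in>{\<gamma>\<in>G. ple \<gamma> \<alpha>}. g \<gamma> * \<phi> (psub \<alpha> \<gamma>)) * of_real r ^ mdeg n \<alpha>"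
      unfolding sum_distrib_right
    proof (intro sum.cong refl)
      fix \<gamma> assume "\<gamma> \<in> {\<gamma>\<in>G. ple \<gamma> \<alpha>}"
      then have "mdeg n \<alpha> = mdeg n \<gamma> + mdeg n (psub \<alpha> \<gamma>)" using mdeg_psub by auto
      then show "gr \<gamma> * a (psub \<alpha> \<gamma>) = g \<gamma> * \<phi> (psub \<alpha> \<gamma>) * of_real r ^ mdeg n \<alpha>"
        unfolding gr_def a_def by (simp add: power_add mult_ac)
    qed
    also have "\<dots> = b \<alpha>" unfolding b_def using mult_op_G[OF \<alpha>I G(1) g0] by simp
    finally show ?thesis .
  qed
  have Q0: "infsum (\<lambda>\<beta>. a \<beta> * Vt \<beta>) I = Nn * of_real Sr"
  proof -
    define d where "d \<gamma> \<alpha> \<beta> = (if padd \<beta> \<gamma> = \<alpha> then a \<beta> else 0)" for \<gamma> \<alpha> \<beta>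
    have d_sum: "d \<gamma> \<alpha> summable_on I" if "\<alpha> \<in> F" for \<gamma> \<alpha>
      unfolding d_def I_def by (rule infsum_delta(2)) (use that F(2) in auto)
    have d_inf: "infsum (d \<gamma> \<alpha>) I = (if ple \<gamma> \<alpha> then a (psub \<alpha> \<gamma>) else 0)" if "\<alpha> \<in> F" for \<gamma> \<alpha>
      unfolding d_def I_def by (rule infsum_delta(1)) (use that F(2) in auto)
    have pt: "a \<beta> * Vt \<beta> = (\<Sum>\<gamma>\<in>G. \<Sum>\<alpha>\<in>F. Nn * gr \<gamma> * cnj (b \<alpha>) * d \<gamma> \<alpha> \<beta>)" for \<beta>
      unfolding Vt_def d_def sum_distrib_left by (intro sum.cong refl) simp
    have inner_sum: "infsum (\<lambda>\<beta>. \<Sum>\<alpha>\<in>F. Nn * gr \<gamma> * cnj (b \<alpha>) * d \<gamma> \<alpha> \<beta>) I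
        = (\<Sum>\<alpha>\<in>F. Nn * gr \<gamma> * cnj (b \<alpha>) * infsum (d \<gamma> \<alpha>) I)
        \<and> (\<lambda>\<beta>. \<Sum>\<alpha>\<in>F. Nn * gr \<gamma> * cnj (b \<alpha>) * d \<gamma> \<alpha> \<beta>) summable_on I" for \<gamma>
    proof -
      have "infsum (\<lambda>\<beta>. \<Sum>\<alpha>\<in>F. Nn * gr \<gamma> * cnj (b \<alpha>) * d \<gamma> \<alpha> \<beta>) I
          = (\<Sum>\<alpha>\<in>F. infsum (\<lambda>\<beta>. Nn * gr \<gamma> * cnj (b \<alpha>) * d \<gamma> \<alpha> \<beta>) I)
        \<and> (\<lambda>\<beta>. \<Sum>\<alpha>\<in>F. Nn * gr \<gamma> * cnj (b \<alpha>) * d \<gamma> \<alpha> \<beta>) summable_on I"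
        by (rule infsum_sum_fin[OF F(1)]) (rule summable_on_cmult_right[OF d_sum])
      moreover have "infsum (\<lambda>\<beta>. Nn * gr \<gamma> * cnj (b \<alpha>) * d \<gamma> \<alpha> \<beta>) I = Nn * gr \<gamma> * cnj (b \<alpha>) * infsum (d \<gamma> \<alpha>) I"
        if "\<alpha> \<in> F" for \<alpha>
        by (rule infsum_cmult_right) (rule d_sum[OF that])
      ultimately show ?thesis by simp
    qed
    have "infsum (\<lambda>\<beta>. a \<beta> * Vt \<beta>) I = infsum (\<lambda>\<beta>. \<Sum>\<gamma>\<in>G. \<Sum>\<alpha>\<in>F. Nn * gr \<gamma> * cnj (b \<alpha>) * d \<gamma> \<alpha> \<beta>) I"
      unfolding pt ..
    also have "\<dots> = (\<Sum>\<gamma>\<in>G. infsum (\<lambda>\<beta>. \<Sum>\<alpha>\<in>F. Nn * gr \<gamma> * cnj (b \<alpha>) * d \<gamma> \<alpha> \<beta>) I)"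
      using infsum_sum_fin[OF G(1), of "\<lambda>\<gamma> \<beta>. \<Sum>\<alpha>\<in>F. Nn * gr \<gamma> * cnj (b \<alpha>) * d \<gamma> \<alpha> \<beta>" I] inner_sum by blast
    also have "\<dots> = (\<Sum>\<gamma>\<in>G. \<Sum>\<alpha>\<in>F. Nn * gr \<gamma> * cnj (b \<alpha>) * (if ple \<gamma> \<alpha> then a (psub \<alpha> \<gamma>) else 0))"
      using inner_sum d_inf by simp
    also have "\<dots> = (\<Sum>\<alpha>\<in>F. \<Sum>\<gamma>\<in>G. Nn * gr \<gamma> * cnj (b \<alpha>) * (if ple \<gamma> \<alpha> then a (psub \<alpha> \<gamma>) else 0))"
      by (rule sum.swap)
    also have "\<dots> = (\<Sum>\<alpha>\<in>F. Nn * cnj (b \<alpha>) * (\<Sum>\<gamma>\<in>G. gr \<gamma> * (if ple \<gamma> \<alpha> then a (psub \<alpha> \<gamma>) else 0)))"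
      by (simp add: sum_distrib_left mult_ac)
    also have "\<dots> = (\<Sum>\<alpha>\<in>F. Nn * (cnj (b \<alpha>) * b \<alpha>))"
      using inner by (simp add: mult.assoc)
    also have "\<dots> = Nn * of_real Sr"
      unfolding Sr_def by (simp add: sum_distrib_left cnorm_sq mult.commute)
    finally show ?thesis .
  qed
  have diff: "norm (Q - Nn * of_real Sr) \<le> 2 * NR * Gs * Bs * \<delta>"
  proof -
    define M where "M = 2 * NR * Gs * Bs"
    have hM: "norm (Wt \<beta> - Vt \<beta>) \<le> M" for \<beta>
      using norm_triangle_ineq4[of "Wt \<beta>" "Vt \<beta>"] Wt_bd[of \<beta>] Vt_bd[of \<beta>] unfolding M_def by linarith
    have sW: "(\<lambda>\<beta>. a \<beta> * Wt \<beta>) summable_on I" by (rule bdd_mult_summable[OF a_sum Wt_bd])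
    have sV: "(\<lambda>\<beta>. a \<beta> * Vt \<beta>) summable_on I" by (rule bdd_mult_summable[OF a_sum Vt_bd])
    have sD: "(\<lambda>\<beta>. a \<beta> * (Wt \<beta> - Vt \<beta>)) summable_on I" by (rule bdd_mult_summable[OF a_sum hM])
    have "infsum (\<lambda>\<beta>. a \<beta> * (Wt \<beta> - Vt \<beta>) + a \<beta> * Vt \<beta>) I
        = infsum (\<lambda>\<beta>. a \<beta> * (Wt \<beta> - Vt \<beta>)) I + infsum (\<lambda>\<beta>. a \<beta> * Vt \<beta>) I"
      by (rule infsum_add[OF sD sV])
    then have "Q - Nn * of_real Sr = infsum (\<lambda>\<beta>. a \<beta> * (Wt \<beta> - Vt \<beta>)) I"
      using Q_eq Q0 by (simp add: algebra_simps)
    also have "norm \<dots> \<le> M * infsum (\<lambda>x. norm (a x)) (I - T)"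
      by (rule tail_bound[OF a_sum T(2)]) (use WV hM in auto)
    also have "\<dots> \<le> M * \<delta>"
      using tail unfolding na_def M_def using NR0 Gs0 Bs0 by (intro mult_left_mono) auto
    finally show ?thesis unfolding M_def .
  qed
  have "Re (Nn * of_real Sr) - Re Q \<le> norm (Q - Nn * of_real Sr)"
    using abs_Re_le_cmod[of "Q - Nn * of_real Sr"] by simp
  then have "NR * Sr - Re Q \<le> 2 * NR * Gs * Bs * \<delta>" using diff unfolding Nn by simp
  then have "NR * Sr \<le> NR * (Gr + 4 * Gs * Bs * \<delta>)" using ReQ by (simp add: algebra_simps)
  then have "Sr \<le> Gr + 4 * Gs * Bs * \<delta>" using NR0 by simp
  then show ?thesis unfolding Sr_def Gr_def Gs_def Bs_def b_def gr_def by simp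
qed


lemma key:
  fixes \<phi> g :: "(nat\<Rightarrow>nat) \<Rightarrow> complex"
  assumes sch: "schur n \<phi>"
    and G: "finite G" "G \<subseteq> multi_idx n" and g0: "\<And>\<gamma>. \<gamma> \<notin> G \<Longrightarrow> g \<gamma> = 0"
    and F: "finite F" "F \<subseteq> multi_idx n"
  shows "(\<Sum>\<alpha>\<in>F. (norm (mult_op n \<phi> g \<alpha>))^2) \<le> (\<Sum>\<gamma>\<in>G. (norm (g \<gamma>))^2)"
proof -
  define f where "f r = (\<Sum>\<alpha>\<in>F. (norm (mult_op n \<phi> g \<alpha> * of_real r ^ mdeg n \<alpha>))^2)" for r :: real
  define G1 where "G1 = (\<Sum>\<gamma>\<in>G. (norm (g \<gamma>))^2)"
  have fr: "f r \<le> G1" if r: "0 < r" "r < 1" for r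
  proof -
    define Gr where "Gr = (\<Sum>\<gamma>\<in>G. (norm (g \<gamma> * of_real r ^ mdeg n \<gamma>))^2)"
    define C where "C = 4 * (\<Sum>\<gamma>\<in>G. norm (g \<gamma> * of_real r ^ mdeg n \<gamma>)) * (\<Sum>\<alpha>\<in>F. norm (mult_op n \<phi> g \<alpha> * of_real r ^ mdeg n \<alpha>))"
    have C0: "C \<ge> 0" unfolding C_def by (intro mult_nonneg_nonneg sum_nonneg) auto
    have "f r \<le> Gr"
    proof (rule field_le_epsilon)
      fix e :: real assume e: "0 < e"
      have "f r \<le> Gr + C * (e / (C + 1))"
        using key_r[OF sch r _ G g0 F, of "e / (C + 1)"] e C0 unfolding f_def Gr_def C_def by (simp add: mult.assoc)
      also have "C * (e / (C + 1)) \<le> e"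
      proof -
        have "C * (e / (C + 1)) = e * (C / (C + 1))" by simp
        also have "\<dots> \<le> e * 1" using C0 e by (intro mult_left_mono) auto
        finally show ?thesis by simp
      qed
      finally show "f r \<le> Gr + e" by simp
    qed
    also have "Gr \<le> G1" unfolding Gr_def G1_def
    proof (rule sum_mono)
      fix \<gamma>
      have "norm (g \<gamma> * of_real r ^ mdeg n \<gamma>) = norm (g \<gamma>) * r ^ mdeg n \<gamma>"
        using r by (simp add: norm_mult norm_power)
      also have "\<dots> \<le> norm (g \<gamma>) * 1" using r by (intro mult_left_mono power_le_one) auto
      finally show "(norm (g \<gamma> * of_real r ^ mdeg n \<gamma>))^2 \<le> (norm (g \<gamma>))^2"
        by (intro power_mono) auto
    qed
    finally show ?thesis .
  qed
  have lim: "(f \<longlongrightarrow> (\<Sum>\<alpha>\<in>F. (norm (mult_op n \<phi> g \<alpha> * of_real 1 ^ mdeg n \<alpha>))^2)) (at_left 1)"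
    unfolding f_def by (intro tendsto_intros)
  have ev: "eventually (\<lambda>r. f r \<le> G1) (at_left (1::real))"
    using eventually_at_left_real[of 0 "1::real"] by (rule eventually_mono) (use fr in auto)
  have "(\<Sum>\<alpha>\<in>F. (norm (mult_op n \<phi> g \<alpha> * of_real 1 ^ mdeg n \<alpha>))^2) \<le> G1"
    by (rule tendsto_upperbound[OF lim ev]) simp
  then show ?thesis unfolding G1_def by simp
qed

definition z0 :: "nat \<Rightarrow> nat" where "z0 = (\<lambda>_. 0)"
definition delta0 :: "(nat \<Rightarrow> nat) \<Rightarrow> complex" where "delta0 \<beta> = (if \<beta> = z0 then 1 else 0)"

lemma z0_in: "z0 \<in> multi_idx n" unfolding z0_def multi_idx_def by simp
lemma mdeg_z0: "mdeg n z0 = 0" unfolding z0_def mdeg_def by simp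

lemma mult_op_delta0: "\<alpha> \<in> multi_idx n \<Longrightarrow> mult_op n \<phi> delta0 \<alpha> = \<phi> \<alpha>"
proof -
  assume a: "\<alpha> \<in> multi_idx n"
  have "mult_op n \<phi> delta0 \<alpha> = (\<Sum>\<gamma>\<in>{\<gamma>\<in>{z0}. ple \<gamma> \<alpha>}. delta0 \<gamma> * \<phi> (psub \<alpha> \<gamma>))"
    by (rule mult_op_G[OF a]) (auto simp: delta0_def)
  also have "{\<gamma>\<in>{z0}. ple \<gamma> \<alpha>} = {z0}" by (auto simp: ple_def z0_def)
  finally have e: "mult_op n \<phi> delta0 \<alpha> = (\<Sum>\<gamma>\<in>{z0}. delta0 \<gamma> * \<phi> (psub \<alpha> \<gamma>))" .
  have "psub \<alpha> z0 = \<alpha>" by (simp add: psub_def z0_def)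
  then show ?thesis using e by (simp add: delta0_def)
qed

lemma schur_H2: assumes sch: "schur n \<phi>" shows "\<phi> \<in> H2 n"
proof -
  have z: "\<forall>\<alpha>. \<alpha> \<notin> multi_idx n \<longrightarrow> \<phi> \<alpha> = 0" using sch unfolding schur_def by blast
  have "(\<lambda>\<alpha>. (norm (\<phi> \<alpha>))\<^sup>2) summable_on multi_idx n"
  proof (rule nonneg_bdd_above_summable_on)
    show "bdd_above (sum (\<lambda>\<alpha>. (norm (\<phi> \<alpha>))\<^sup>2) ` {F. F \<subseteq> multi_idx n \<and> finite F})"
    proof (rule bdd_aboveI)
      fix x assume "x \<in> sum (\<lambda>\<alpha>. (norm (\<phi> \<alpha>))\<^sup>2) ` {F. F \<subseteq> multi_idx n \<and> finite F}"
      then obtain F where F: "F \<subseteq> multi_idx n" "finite F" and x: "x = (\<Sum>\<alpha>\<in>F. (norm (\<phi> \<alpha>))\<^sup>2)" by auto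
      have "(\<Sum>\<alpha>\<in>F. (norm (mult_op n \<phi> delta0 \<alpha>))^2) \<le> (\<Sum>\<gamma>\<in>{z0}. (norm (delta0 \<gamma>))^2)"
        by (rule key[OF sch]) (use F z0_in in \<open>auto simp: delta0_def\<close>)
      moreover have "(\<Sum>\<alpha>\<in>F. (norm (mult_op n \<phi> delta0 \<alpha>))^2) = x"
        unfolding x using F mult_op_delta0 by (intro sum.cong) auto
      ultimately show "x \<le> 1" by (simp add: delta0_def)
    qed
  qed auto
  then show ?thesis using z unfolding H2_def by blast
qed

lemma finite_D: "finite {\<alpha>\<in>multi_idx n. mdeg n \<alpha> \<le> m}" by (rule finite_deg_le)

lemma contr:
  assumes sch: "schur n \<phi>" and g: "g \<in> Qm n m"
  shows "h2_norm n (compr n m \<phi> g) \<le> h2_norm n g"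
proof -
  define D where "D = {\<alpha>\<in>multi_idx n. mdeg n \<alpha> \<le> m}"
  have D: "finite D" "D \<subseteq> multi_idx n" unfolding D_def using finite_deg_le by auto
  have g0: "g \<gamma> = 0" if "\<gamma> \<notin> D" for \<gamma>
    using g that unfolding D_def Qm_def H2_def by (auto simp: not_le)
  have 1: "infsum (\<lambda>\<alpha>. (norm (compr n m \<phi> g \<alpha>))\<^sup>2) (multi_idx n) = (\<Sum>\<alpha>\<in>D. (norm (compr n m \<phi> g \<alpha>))\<^sup>2)"
    by (rule infsum_finite_support[OF D]) (auto simp: D_def compr_def proj_Qm_def)
  have 2: "infsum (\<lambda>\<alpha>. (norm (g \<alpha>))\<^sup>2) (multi_idx n) = (\<Sum>\<alpha>\<in>D. (norm (g \<alpha>))\<^sup>2)"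
    by (rule infsum_finite_support[OF D]) (use g0 in auto)
  have 3: "(\<Sum>\<alpha>\<in>D. (norm (compr n m \<phi> g \<alpha>))\<^sup>2) = (\<Sum>\<alpha>\<in>D. (norm (mult_op n \<phi> g \<alpha>))\<^sup>2)"
    by (intro sum.cong) (auto simp: D_def compr_def proj_Qm_def)
  have "(\<Sum>\<alpha>\<in>D. (norm (mult_op n \<phi> g \<alpha>))\<^sup>2) \<le> (\<Sum>\<alpha>\<in>D. (norm (g \<alpha>))\<^sup>2)"
    by (rule key[OF sch D g0 D])
  then show ?thesis unfolding h2_norm_def 1 2 3 by (rule real_sqrt_le_mono)
qed

lemma perp_zero:
  assumes f: "f \<in> Qm_perp n m" and a: "\<alpha> \<in> multi_idx n" "mdeg n \<alpha> \<le> m"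
  shows "f \<alpha> = 0"
proof -
  define q where "q \<beta> = (if \<beta> = \<alpha> then (1::complex) else 0)" for \<beta>
  have s: "(\<lambda>\<beta>. (norm (q \<beta>))\<^sup>2) summable_on multi_idx n"
    by (rule infsum_finite_support(2)[of "{\<alpha>}"]) (use a in \<open>auto simp: q_def\<close>)
  have "q \<in> Qm n m" unfolding Qm_def H2_def using s a by (auto simp: q_def)
  then have "h2_inner n f q = 0" using f unfolding Qm_perp_def by blast
  moreover have "h2_inner n f q = f \<alpha>"
    unfolding h2_inner_def
    by (subst infsum_finite_support(1)[of "{\<alpha>}"]) (use a in \<open>auto simp: q_def\<close>)
  ultimately show ?thesis by simp
qed

theorem proposition10p1:
  fixes n m :: nat and p :: "(nat \<Rightarrow> nat) \<Rightarrow> complex"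
  assumes "n \<ge> 1" and "p \<in> Qm n m"
  shows "(\<exists>f \<in> Qm_perp n m. schur n (\<lambda>\<alpha>. p \<alpha> + f \<alpha>)) \<longleftrightarrow>
         ((\<forall>g \<in> Qm n m. h2_norm n (compr n m p g) \<le> h2_norm n g) \<and>
          (\<exists>\<phi>. schur n \<phi> \<and> (\<forall>g \<in> Qm n m. compr n m p g = compr n m \<phi> g)))"
proof
  assume "\<exists>f \<in> Qm_perp n m. schur n (\<lambda>\<alpha>. p \<alpha> + f \<alpha>)"
  then obtain f where f: "f \<in> Qm_perp n m" and sch: "schur n (\<lambda>\<alpha>. p \<alpha> + f \<alpha>)" by blast
  define \<phi> where "\<phi> = (\<lambda>\<alpha>. p \<alpha> + f \<alpha>)"
  have ceq: "compr n m p g = compr n m \<phi> g" for g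
  proof
    fix \<alpha>
    show "compr n m p g \<alpha> = compr n m \<phi> g \<alpha>"
    proof (cases "\<alpha> \<in> multi_idx n \<and> mdeg n \<alpha> \<le> m")
      case True
      have "(\<Sum>\<beta>\<in>{\<beta>. \<forall>i. \<beta> i \<le> \<alpha> i}. p \<beta> * g (\<lambda>i. \<alpha> i - \<beta> i)) = (\<Sum>\<beta>\<in>{\<beta>. \<forall>i. \<beta> i \<le> \<alpha> i}. \<phi> \<beta> * g (\<lambda>i. \<alpha> i - \<beta> i))"
      proof (rule sum.cong[OF refl])
        fix \<beta> assume "\<beta> \<in> {\<beta>. \<forall>i. \<beta> i \<le> \<alpha> i}"
        then have pl: "ple \<beta> \<alpha>" unfolding ple_def by simp
        then have "\<beta> \<in> multi_idx n" using True multi_idx_ple by blast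
        moreover have "mdeg n \<beta> \<le> m" using mdeg_psub[OF pl, of n] True by simp
        ultimately have "f \<beta> = 0" by (rule perp_zero[OF f])
        then show "p \<beta> * g (\<lambda>i. \<alpha> i - \<beta> i) = \<phi> \<beta> * g (\<lambda>i. \<alpha> i - \<beta> i)" unfolding \<phi>_def by simp
      qed
      then show ?thesis unfolding compr_def proj_Qm_def mult_op_def using True by simp
    next
      case False
      then show ?thesis by (auto simp: compr_def proj_Qm_def)
    qed
  qed
  have schp: "schur n \<phi>" unfolding \<phi>_def by (rule sch)
  show "(\<forall>g \<in> Qm n m. h2_norm n (compr n m p g) \<le> h2_norm n g) \<and>
          (\<exists>\<phi>. schur n \<phi> \<and> (\<forall>g \<in> Qm n m. compr n m p g = compr n m \<phi> g))"
    using contr[OF schp] ceq schp by auto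
next
  assume "(\<forall>g \<in> Qm n m. h2_norm n (compr n m p g) \<le> h2_norm n g) \<and>
          (\<exists>\<phi>. schur n \<phi> \<and> (\<forall>g \<in> Qm n m. compr n m p g = compr n m \<phi> g))"
  then obtain \<phi> where sch: "schur n \<phi>" and ceq: "\<And>g. g \<in> Qm n m \<Longrightarrow> compr n m p g = compr n m \<phi> g" by blast
  have d0: "delta0 \<in> Qm n m"
  proof -
    have "(\<lambda>\<beta>. (norm (delta0 \<beta>))\<^sup>2) summable_on multi_idx n"
      by (rule infsum_finite_support(2)[of "{z0}"]) (use z0_in in \<open>auto simp: delta0_def\<close>)
    then show ?thesis unfolding Qm_def H2_def using z0_in mdeg_z0 by (auto simp: delta0_def)
  qed
  have low: "\<phi> \<alpha> = p \<alpha>" if "\<alpha> \<in> multi_idx n" "mdeg n \<alpha> \<le> m" for \<alpha>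
  proof -
    have "compr n m p delta0 \<alpha> = compr n m \<phi> delta0 \<alpha>" using ceq[OF d0] by simp
    then show ?thesis using that mult_op_delta0 unfolding compr_def proj_Qm_def by simp
  qed
  define f where "f \<alpha> = \<phi> \<alpha> - p \<alpha>" for \<alpha>
  have pH: "p \<in> H2 n" using assms(2) unfolding Qm_def by blast
  have \<phi>H: "\<phi> \<in> H2 n" by (rule schur_H2[OF sch])
  have fz: "f \<alpha> = 0" if "\<alpha> \<notin> multi_idx n" for \<alpha>
    using pH \<phi>H that unfolding f_def H2_def by auto
  have fle: "(norm (f \<alpha>))\<^sup>2 \<le> (norm (\<phi> \<alpha>))\<^sup>2" if "\<alpha> \<in> multi_idx n" for \<alpha>
  proof (cases "mdeg n \<alpha> \<le> m")
    case True then show ?thesis using low[OF that] unfolding f_def by simp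
  next
    case False
    then have "p \<alpha> = 0" using assms(2) unfolding Qm_def by auto
    then show ?thesis unfolding f_def by simp
  qed
  have fs: "(\<lambda>\<alpha>. (norm (f \<alpha>))\<^sup>2) summable_on multi_idx n"
    by (rule summable_on_comparison_test[of "\<lambda>\<alpha>. (norm (\<phi> \<alpha>))\<^sup>2"]) (use \<phi>H fle in \<open>auto simp: H2_def\<close>)
  have fH: "f \<in> H2 n" unfolding H2_def using fz fs by blast
  have forth: "h2_inner n f q = 0" if q: "q \<in> Qm n m" for q
    unfolding h2_inner_def
  proof (rule infsum_0)
    fix \<alpha> assume a: "\<alpha> \<in> multi_idx n"
    show "f \<alpha> * cnj (q \<alpha>) = 0"
    proof (cases "mdeg n \<alpha> \<le> m")
      case True then show ?thesis using low[OF a] unfolding f_def by simp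
    next
      case False then show ?thesis using q unfolding Qm_def by auto
    qed
  qed
  have "f \<in> Qm_perp n m" unfolding Qm_perp_def using fH forth by blast
  moreover have "(\<lambda>\<alpha>. p \<alpha> + f \<alpha>) = \<phi>" unfolding f_def by auto
  ultimately show "\<exists>f \<in> Qm_perp n m. schur n (\<lambda>\<alpha>. p \<alpha> + f \<alpha>)" using sch by auto
qed

end
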